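(* Let $\Gamma=(V,\nu,\mu)$ be a fuzzy graph on $n$ vertices. Then $$\sigma^*(\Gamma)\le\frac{(n-1)^2\,\bigl(2\,\mathrm{ew}(\Gamma)\bigr)^2}{n^3}.$$
   Context: A fuzzy graph $\Gamma=(V,\nu,\mu)$ consists of a finite vertex set $V$ with $|V|=n\ge1$, a map $\nu:V\to[0,1]$, and a symmetric map $\mu:V\times V\to[0,1]$ with $\mu(u,v)\le\min(\nu(u),\nu(v))$. The fuzzy degree is $d_\Gamma(v)=\sum_{u\ne v}\mu(v,u)$, the fuzzy size is $\mathrm{ew}(\Gamma)=\sum_{\{u,v\},u\ne v}\mu(u,v)$, $\lambda=2\,\mathrm{ew}(\Gamma)/n$, and the fuzzy sigma index is $\sigma^*(\Gamma)=\frac1n\sum_{v}(d_\Gamma(v)-\lambda)^2$. *)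

theory Defs
  imports Complex_Main
begin

definition fuzzy_graph :: "'a set \<Rightarrow> ('a \<Rightarrow> real) \<Rightarrow> ('a \<Rightarrow> 'a \<Rightarrow> real) \<Rightarrow> bool" where
  "fuzzy_graph V \<nu> \<mu> \<longleftrightarrow> finite V \<and> V \<noteq> {} \<and>
     (\<forall>v\<in>V. 0 \<le> \<nu> v \<and> \<nu> v \<le> 1) \<and>
     (\<forall>u\<in>V. \<forall>v\<in>V. 0 \<le> \<mu> u v \<and> \<mu> u v \<le> 1 \<and> \<mu> u v = \<mu> v u \<and> \<mu> u v \<le> min (\<nu> u) (\<nu> v))"

definition fuzzy_degree :: "'a set \<Rightarrow> ('a \<Rightarrow> 'a \<Rightarrow> real) \<Rightarrow> 'a \<Rightarrow> real" where
  "fuzzy_degree V \<mu> v = (\<Sum>u\<in>V - {v}. \<mu> v u)"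

definition fuzzy_size :: "'a set \<Rightarrow> ('a \<Rightarrow> 'a \<Rightarrow> real) \<Rightarrow> real" where
  "fuzzy_size V \<mu> = (\<Sum>e\<in>{e. \<exists>u\<in>V. \<exists>v\<in>V. u \<noteq> v \<and> e = {u, v}}. (SOME p. \<exists>u v. e = {u,v} \<and> u \<noteq> v \<and> p = \<mu> u v))"

definition fuzzy_lambda :: "'a set \<Rightarrow> ('a \<Rightarrow> 'a \<Rightarrow> real) \<Rightarrow> real" where
  "fuzzy_lambda V \<mu> = 2 * fuzzy_size V \<mu> / real (card V)"

definition fuzzy_sigma_star :: "'a set \<Rightarrow> ('a \<Rightarrow> 'a \<Rightarrow> real) \<Rightarrow> real" where
  "fuzzy_sigma_star V \<mu> = (1 / real (card V)) *
     (\<Sum>v\<in>V. (fuzzy_degree V \<mu> v - fuzzy_lambda V \<mu>)^2)"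

end

theory Submission
  imports Defs
begin

lemma some_weight:
  assumes fg: "fuzzy_graph V \<nu> \<mu>" and u: "u \<in> V" and v: "v \<in> V" and uv: "u \<noteq> v"
  shows "(SOME p. \<exists>a b. {u,v} = {a,b} \<and> a \<noteq> b \<and> p = \<mu> a b) = \<mu> u v"
proof -
  have sym: "\<mu> a b = \<mu> b a" if "a \<in> V" "b \<in> V" for a b
    using fg that unfolding fuzzy_graph_def by blast
  have ex: "\<exists>p. \<exists>a b. {u,v} = {a,b} \<and> a \<noteq> b \<and> p = \<mu> a b" using uv by blast
  have all: "p = \<mu> u v" if "\<exists>a b. {u,v} = {a,b} \<and> a \<noteq> b \<and> p = \<mu> a b" for p
  proof -
    from that obtain a b where ab: "{u,v} = {a,b}" "p = \<mu> a b" by blast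
    then have "(a = u \<and> b = v) \<or> (a = v \<and> b = u)" by (metis doubleton_eq_iff)
    then show ?thesis using ab sym[OF u v] by auto
  qed
  show ?thesis using someI_ex[OF ex] all by blast
qed

theorem theorem2p8:
  fixes V :: "'a set" and \<nu> :: "'a \<Rightarrow> real" and \<mu> :: "'a \<Rightarrow> 'a \<Rightarrow> real"
  assumes "fuzzy_graph V \<nu> \<mu>"
  defines "n \<equiv> real (card V)"
  shows "fuzzy_sigma_star V \<mu> \<le> (n - 1)^2 * (2 * fuzzy_size V \<mu>)^2 / n^3"
proof -
  note fg = assms(1)
  have fin: "finite V" and ne: "V \<noteq> {}" using fg unfolding fuzzy_graph_def by auto
  have npos: "n > 0" using fin ne unfolding n_def by (simp add: card_gt_0_iff)
  have nn: "\<mu> a b \<ge> 0" if "a \<in> V" "b \<in> V" for a b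
    using fg that unfolding fuzzy_graph_def by blast
  define E where "E = {e. \<exists>u\<in>V. \<exists>v\<in>V. u \<noteq> v \<and> e = {u, v}}"
  define w where "w e = (SOME p. \<exists>u v. e = {u,v} \<and> u \<noteq> v \<and> p = \<mu> u v)" for e
  define F where "F = fuzzy_size V \<mu>"
  have F_def': "F = sum w E" unfolding F_def fuzzy_size_def E_def w_def by simp
  have wuv: "w {u,v} = \<mu> u v" if "u \<in> V" "v \<in> V" "u \<noteq> v" for u v
    unfolding w_def using some_weight[OF fg that] .
  have Esub: "E \<subseteq> Pow V" unfolding E_def by auto
  have finE: "finite E" using Esub fin by (meson finite_Pow_iff finite_subset)
  have wnn: "w e \<ge> 0" if "e \<in> E" for e
    using that unfolding E_def using wuv nn by auto
  define d where "d v = fuzzy_degree V \<mu> v" for v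
  define P where "P = {p \<in> V \<times> V. fst p \<noteq> snd p}"
  have finP: "finite P" unfolding P_def using fin by auto
  have D: "(\<Sum>v\<in>V. d v) = 2 * F"
  proof -
    have "(\<Sum>v\<in>V. d v) = (\<Sum>v\<in>V. \<Sum>u\<in>V - {v}. \<mu> v u)"
      unfolding d_def fuzzy_degree_def by simp
    also have "\<dots> = (\<Sum>p\<in>P. \<mu> (fst p) (snd p))"
    proof -
      have "P = Sigma V (\<lambda>v. V - {v})" unfolding P_def by auto
      then show ?thesis using fin by (simp add: sum.Sigma split_beta)
    qed
    also have "\<dots> = (\<Sum>e\<in>(\<lambda>p. {fst p, snd p}) ` P. \<Sum>p\<in>{p\<in>P. {fst p, snd p} = e}. \<mu> (fst p) (snd p))"
      using finP by (rule sum.image_gen)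
    also have "(\<lambda>p. {fst p, snd p}) ` P = E" unfolding P_def E_def by force
    also have "(\<Sum>e\<in>E. \<Sum>p\<in>{p\<in>P. {fst p, snd p} = e}. \<mu> (fst p) (snd p)) = (\<Sum>e\<in>E. 2 * w e)"
    proof (rule sum.cong[OF refl])
      fix e assume "e \<in> E"
      then obtain u v where uv: "u \<in> V" "v \<in> V" "u \<noteq> v" "e = {u,v}" unfolding E_def by blast
      have "{p\<in>P. {fst p, snd p} = e} = {(u,v),(v,u)}"
        using uv unfolding P_def by (auto simp: doubleton_eq_iff)
      then have "(\<Sum>p\<in>{p\<in>P. {fst p, snd p} = e}. \<mu> (fst p) (snd p)) = \<mu> u v + \<mu> v u"
        using uv by simp
      also have "\<dots> = 2 * w e" using uv wuv[OF uv(1-3)] fg unfolding fuzzy_graph_def by auto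
      finally show "(\<Sum>p\<in>{p\<in>P. {fst p, snd p} = e}. \<mu> (fst p) (snd p)) = 2 * w e" .
    qed
    finally show ?thesis using F_def' by (simp add: sum_distrib_left)
  qed
  have dle: "d v \<le> F" "d v \<ge> 0" if "v \<in> V" for v
  proof -
    have "d v = (\<Sum>u\<in>V - {v}. w {v,u})"
      unfolding d_def fuzzy_degree_def using wuv that by (intro sum.cong) auto
    also have "\<dots> = sum w ((\<lambda>u. {v,u}) ` (V - {v}))"
      by (rule sum.reindex[symmetric, unfolded comp_def]) (auto simp: inj_on_def doubleton_eq_iff)
    also have "\<dots> \<le> sum w E"
      by (rule sum_mono2[OF finE]) (use that wnn in \<open>auto simp: E_def\<close>)
    finally show "d v \<le> F" using F_def' by simp
    show "d v \<ge> 0" unfolding d_def fuzzy_degree_def using nn that by (intro sum_nonneg) auto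
  qed
  have sq: "(\<Sum>v\<in>V. (d v)^2) \<le> 2 * F^2"
  proof -
    have "(\<Sum>v\<in>V. (d v)^2) \<le> (\<Sum>v\<in>V. d v * F)"
      by (rule sum_mono) (use dle in \<open>auto simp: power2_eq_square intro: mult_left_mono\<close>)
    also have "\<dots> = 2 * F^2" using D by (simp add: sum_distrib_right[symmetric] power2_eq_square)
    finally show ?thesis .
  qed
  have lam: "fuzzy_lambda V \<mu> = 2 * F / n" unfolding fuzzy_lambda_def F_def n_def by simp
  have "(\<Sum>v\<in>V. (d v - 2*F/n)^2) = (\<Sum>v\<in>V. (d v)^2) - 2*(2*F/n) * (\<Sum>v\<in>V. d v) + n * (2*F/n)^2"
  proof -
    have a: "(\<Sum>v\<in>V. F * (d v * 4)) = F * (sum d V * 4)"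
      by (simp add: sum_distrib_left sum_distrib_right)
    show ?thesis
      by (simp add: power2_diff sum.distrib sum_subtractf sum_distrib_left n_def mult_ac sum_divide_distrib[symmetric] a)
  qed
  also have "\<dots> = (\<Sum>v\<in>V. (d v)^2) - 4*F^2/n"
    using D npos by (simp add: field_simps power2_eq_square)
  finally have eq: "(\<Sum>v\<in>V. (d v - 2*F/n)^2) = (\<Sum>v\<in>V. (d v)^2) - 4*F^2/n" .
  have "fuzzy_sigma_star V \<mu> = (1/n) * ((\<Sum>v\<in>V. (d v)^2) - 4*F^2/n)"
    unfolding fuzzy_sigma_star_def lam d_def[symmetric] eq by (simp add: n_def)
  also have "\<dots> \<le> (1/n) * (2*F^2 - 4*F^2/n)"
    using sq npos by (intro mult_left_mono) auto
  also have "\<dots> \<le> (n - 1)^2 * (2 * F)^2 / n^3"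
  proof -
    have "0 \<le> (n-1)^2" by simp
    then have "2*n^2 - 4*n \<le> 4*(n-1)^2" by (simp add: power2_eq_square algebra_simps)
    then have "F^2 * (2*n^2 - 4*n) \<le> F^2 * (4*(n-1)^2)"
      by (intro mult_left_mono) auto
    then have "F^2 * (2*n^2 - 4*n) / n^3 \<le> F^2 * (4*(n-1)^2) / n^3"
      using npos by (intro divide_right_mono) auto
    moreover have "(1/n) * (2*F^2 - 4*F^2/n) = F^2 * (2*n^2 - 4*n) / n^3"
      using npos by (simp add: field_simps power2_eq_square power3_eq_cube)
    moreover have "(n - 1)^2 * (2 * F)^2 / n^3 = F^2 * (4*(n-1)^2) / n^3"
      by (simp add: power_mult_distrib)
    ultimately show ?thesis by (metis mult_ac)
  qed
  finally show ?thesis unfolding F_def .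
qed

end
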